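(* Let the Timehash scheme be as described in the context, with hierarchy $m_1 > m_2 > \dots > m_k$. Let a document have operating hours given by integers $0 \le s < e \le 1440$, i.e. it is open at the minutes $t$ with $s \le t < e$, and let $H(s,e)$ be its set of index keys. Then for every minute $t$ with $s \le t < e$, the query key set $Q(t)$ satisfies $Q(t) \cap H(s,e) \neq \emptyset$; that is, the document is retrieved by the point query at $t$ (zero false negatives).
   Context: Time of day is measured in minutes since midnight, $\{0,1,\dots,1439\}$. A hierarchy of measures is a sequence of positive integers $m_1 > m_2 > \dots > m_k$ with $m_k = 1$, $m_i$ dividing $m_{i-1}$ for $2 \le i \le k$, and $m_1$ dividing $1440$ (e.g. $(240,60,15,5,1)$). A level-$i$ block is a set of minutes $[a, a+m_i) = \{a, a+1, \dots, a+m_i-1\}$ with $a$ a nonnegative multiple of $m_i$ and $a + m_i \le 1440$; its key is the pair $(i,a)$. Every level-$i$ block with $i \ge 2$ is contained in a unique level-$(i-1)$ block, its parent. For a range $0 \le s < e \le 1440$ (the minutes $s,\dots,e-1$), the index key set $H(s,e)$ is the set of keys of all blocks $B$ (at any level) such that $B \subseteq [s,e)$ and either $B$ is at level 1 or the parent of $B$ is not contained in $[s,e)$ (this is the hierarchical decomposition obtained by taking the complete coarsest blocks inside the range and recursively refining the partially covered boundary blocks at finer levels). For a query minute $t$, the query key set $Q(t)$ consists of the keys of the $k$ blocks, one at each level $i=1,\dots,k$, that contain $t$. A document is retrieved by the point query at $t$ iff some query key in $Q(t)$ equals some index key of the document. *)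

theory Defs
  imports Main
begin

text \<open>A hierarchy of measures m_1 > ... > m_k is a list ms with ms ! (i - 1) = m_i.
  Levels are numbered 1..k as in the paper; a key is a pair (level i, start a).\<close>

definition meas :: "nat list \<Rightarrow> nat \<Rightarrow> nat" where
  "meas ms i = ms ! (i - 1)"

definition hierarchy :: "nat list \<Rightarrow> bool" where
  "hierarchy ms \<longleftrightarrow> ms \<noteq> [] \<and> (\<forall>x\<in>set ms. 0 < x)
     \<and> sorted_wrt (>) ms \<and> last ms = 1
     \<and> (\<forall>i. 2 \<le> i \<and> i \<le> length ms \<longrightarrow> meas ms i dvd meas ms (i - 1))
     \<and> hd ms dvd 1440"

definition block :: "nat list \<Rightarrow> nat \<Rightarrow> nat \<Rightarrow> nat set" where
  "block ms i a = {a ..< a + meas ms i}"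

definition is_block :: "nat list \<Rightarrow> nat \<times> nat \<Rightarrow> bool" where
  "is_block ms k \<longleftrightarrow> (case k of (i, a) \<Rightarrow>
     1 \<le> i \<and> i \<le> length ms \<and> meas ms i dvd a \<and> a + meas ms i \<le> 1440)"

text \<open>Parent of a level-i block (i >= 2): the unique level-(i-1) block containing it.\<close>
definition parent_start :: "nat list \<Rightarrow> nat \<Rightarrow> nat \<Rightarrow> nat" where
  "parent_start ms i a = a - a mod meas ms (i - 1)"

definition index_keys :: "nat list \<Rightarrow> nat \<Rightarrow> nat \<Rightarrow> (nat \<times> nat) set" where
  "index_keys ms s e = {(i, a). is_block ms (i, a) \<and> block ms i a \<subseteq> {s ..< e}
      \<and> (i = 1 \<or> \<not> block ms (i - 1) (parent_start ms i a) \<subseteq> {s ..< e})}"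

definition query_keys :: "nat list \<Rightarrow> nat \<Rightarrow> (nat \<times> nat) set" where
  "query_keys ms t = {(i, a). is_block ms (i, a) \<and> t \<in> block ms i a}"

end

theory Submission imports Defs begin
lemma key: fixes t m M :: nat assumes "m dvd M" "0 < M"
  shows "(t - t mod m) - (t - t mod m) mod M = t - t mod M"
proof -
  define q r where "q = t div M" and "r = t mod M"
  have t: "t = M*q + r" by (simp add: q_def r_def)
  have rm: "t mod m = r mod m" using assms(1) by (simp add: r_def mod_mod_cancel)
  have rl: "r - r mod m < M" using assms(2) by (simp add: r_def less_imp_diff_less)
  define x where "x = r - r mod m"
  have "t - t mod m = M*q + x" using t rm by (simp add: x_def)
  moreover have "(M*q + x) mod M = x" using rl by (simp add: x_def[symmetric])
  moreover have "t - t mod M = M*q" by (simp add: q_def minus_mod_eq_mult_div)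
  ultimately show ?thesis by simp
qed

theorem theorem1:
  fixes ms :: "nat list" and s e t :: nat
  assumes "hierarchy ms"
    and "s < e" and "e \<le> 1440"
    and "s \<le> t" and "t < e"
  shows "query_keys ms t \<inter> index_keys ms s e \<noteq> {}"
proof -
  define k where "k = length ms"
  define f where "f i = t - t mod meas ms i" for i
  have H: "ms \<noteq> []" "\<forall>x\<in>set ms. 0 < x" "last ms = 1"
    "\<forall>i. 2 \<le> i \<and> i \<le> length ms \<longrightarrow> meas ms i dvd meas ms (i - 1)"
    using assms(1) unfolding hierarchy_def by auto
  have pos: "0 < meas ms i" if "1 \<le> i" "i \<le> k" for i
    using H(2) that unfolding meas_def k_def by (simp add: nth_mem)
  have k1: "1 \<le> k" using H(1) by (simp add: k_def Suc_leI)
  have mk: "meas ms k = 1" using H(1,3) by (simp add: meas_def k_def last_conv_nth)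
  define P where "P i \<longleftrightarrow> 1 \<le> i \<and> i \<le> k \<and> block ms i (f i) \<subseteq> {s..<e}" for i
  have Pk: "P k" using k1 mk assms by (simp add: P_def f_def block_def)
  define i where "i = (LEAST i. P i)"
  have Pi: "P i" using Pk unfolding i_def by (rule LeastI)
  have min: "\<not> P j" if "j < i" for j using that not_less_Least i_def by blast
  have i1: "1 \<le> i" "i \<le> k" and sub: "block ms i (f i) \<subseteq> {s..<e}" using Pi P_def by auto
  have mp: "0 < meas ms i" using pos i1 by auto
  have "t mod meas ms i < meas ms i" using mp by simp
  hence tin: "t \<in> block ms i (f i)" by (simp add: block_def f_def)
  have "f i + meas ms i - 1 \<in> block ms i (f i)" using mp by (simp add: block_def)
  hence "f i + meas ms i - 1 < e" using sub by auto
  hence "f i + meas ms i \<le> e" by simp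
  hence isb: "is_block ms (i, f i)" using i1 assms(3)
    by (simp add: is_block_def k_def f_def minus_mod_eq_mult_div)
  have "(i, f i) \<in> index_keys ms s e"
  proof (cases "i = 1")
    case True then show ?thesis using isb sub by (simp add: index_keys_def)
  next
    case False
    hence i2: "2 \<le> i" using i1 by simp
    have dv: "meas ms i dvd meas ms (i - 1)" using H(4) i2 i1 k_def by auto
    have mp': "0 < meas ms (i - 1)" using pos i2 i1 by simp
    have "parent_start ms i (f i) = f (i - 1)"
      unfolding parent_start_def f_def using key[OF dv mp'] by simp
    moreover have "\<not> P (i - 1)" using min i2 by simp
    ultimately have "\<not> block ms (i - 1) (parent_start ms i (f i)) \<subseteq> {s..<e}"
      using i2 i1 unfolding P_def by simp
    then show ?thesis using isb sub by (simp add: index_keys_def)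
  qed
  moreover have "(i, f i) \<in> query_keys ms t" using isb tin by (simp add: query_keys_def)
  ultimately show ?thesis by blast
qed

end
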